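(* Let $q$ be a prime power and $k\ge3$, $h\ge2$ integers, and $1\le u_0<u_1\le\dots\le u_h$ integers. Let $U_0,U_1,\dots,U_h$ be subspaces of $\mathbf F_q^k$ of dimensions $u_0,u_1,\dots,u_h$ with $U_i\cap U_j=U_0$ for all distinct $i,j\in\{1,\dots,h\}$, and assume $q^k-q^{k-1}>q^{u_0}-1+\sum_{i=1}^h(q^{u_i}-q^{u_0})$. Let $U$ be the set of nonzero vectors of $\mathbf F_q^k$ not in $U_1\cup\dots\cup U_h$, let $\widetilde G$ be a matrix whose columns consist of exactly one representative of each class $\{\lambda\mathbf v:\lambda\in\mathbf F_q^*\}$, $\mathbf v\in U$, and let $\mathbf C$ be the linear code with generator matrix $\widetilde G$. Then $\mathbf C$ is a linear $\big[\frac{(q^k-q^{u_0})-\sum_{i=1}^h(q^{u_i}-q^{u_0})}{q-1},\,k,\,d\big]_q$ code with $d\ge q^{k-1}-\sum_{i=1}^hq^{u_i-1}$. *)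

theory Defs
  imports Complex_Main "HOL-Library.Function_Algebras"
begin

text \<open>Vectors of F^k are modelled as functions nat => F that vanish outside {..<k};
  the ambient vector space is the space of all functions nat => F with pointwise operations.\<close>

definition fscale :: "'a::field \<Rightarrow> (nat \<Rightarrow> 'a) \<Rightarrow> (nat \<Rightarrow> 'a)" where
  "fscale c v = (\<lambda>i. c * v i)"

interpretation fvs: vector_space fscale
  by unfold_locales (auto simp: fscale_def fun_eq_iff algebra_simps)

definition vecs :: "nat \<Rightarrow> (nat \<Rightarrow> 'a::field) set" where
  "vecs k = {v. \<forall>i\<ge>k. v i = 0}"

text \<open>Linear code of length n (number of columns) generated by the k x n matrix whose
  j-th column is cols ! j: all codewords x G, x in F^k.\<close>
definition gen_code :: "nat \<Rightarrow> (nat \<Rightarrow> 'a::field) list \<Rightarrow> (nat \<Rightarrow> 'a) set" where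
  "gen_code k cols =
     {(\<lambda>j. if j < length cols then (\<Sum>i<k. x i * (cols ! j) i) else 0) | x. x \<in> vecs k}"

definition hamming_dist :: "nat \<Rightarrow> (nat \<Rightarrow> 'a) \<Rightarrow> (nat \<Rightarrow> 'a) \<Rightarrow> nat" where
  "hamming_dist n c c' = card {j. j < n \<and> c j \<noteq> c' j}"

definition min_dist :: "nat \<Rightarrow> (nat \<Rightarrow> 'a) set \<Rightarrow> nat" where
  "min_dist n C = Min {hamming_dist n c c' | c c'. c \<in> C \<and> c' \<in> C \<and> c \<noteq> c'}"

end

theory Submission imports Defs "HOL-Library.FuncSet" begin

lemma card_span_indep:
  fixes B :: "(nat \<Rightarrow> 'a::{field,finite}) set"
  assumes "finite B" "fvs.independent B"
  shows "finite (fvs.span B) \<and> card (fvs.span B) = card (UNIV :: 'a set) ^ card B"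
  using assms
proof (induction B rule: finite_induct)
  case empty
  then show ?case by simp
next
  case (insert b B)
  have iB: "fvs.independent B" and nb: "b \<notin> fvs.span B"
    using insert.prems insert.hyps by (auto simp: fvs.independent_insert)
  from insert.IH[OF iB] have IH: "finite (fvs.span B)" "card (fvs.span B) = card (UNIV :: 'a set) ^ card B" by auto
  define f where "f = (\<lambda>(c, v). fscale c b + v)"
  have eq: "fvs.span (insert b B) = f ` (UNIV \<times> fvs.span B)"
  proof
    show "fvs.span (insert b B) \<subseteq> f ` (UNIV \<times> fvs.span B)"
    proof
      fix x assume "x \<in> fvs.span (insert b B)"
      then obtain c where "x - fscale c b \<in> fvs.span B" by (auto simp: fvs.span_breakdown_eq)
      then show "x \<in> f ` (UNIV \<times> fvs.span B)"
        by (intro image_eqI[of _ _ "(c, x - fscale c b)"]) (auto simp: f_def)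
    qed
  next
    show "f ` (UNIV \<times> fvs.span B) \<subseteq> fvs.span (insert b B)"
    proof clarify
      fix c v assume "v \<in> fvs.span B"
      moreover have "f (c, v) - fscale c b = v" by (simp add: f_def)
      ultimately show "f (c, v) \<in> fvs.span (insert b B)"
        unfolding fvs.span_breakdown_eq by (intro exI[of _ c]) simp
    qed
  qed
  have inj: "inj_on f (UNIV \<times> fvs.span B)"
  proof (rule inj_onI, clarify)
    fix c v c' v' assume v: "v \<in> fvs.span B" and v': "v' \<in> fvs.span B" and e: "f (c, v) = f (c', v')"
    have e2: "fscale (c - c') b = v' - v" using e by (auto simp: f_def fscale_def fun_eq_iff algebra_simps)
    show "c = c' \<and> v = v'"
    proof (cases "c = c'")
      case True then show ?thesis using e2 by (auto simp: fscale_def fun_eq_iff)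
    next
      case False
      have "fscale (inverse (c - c')) (v' - v) \<in> fvs.span B"
        using v v' by (intro fvs.span_scale fvs.span_diff)
      moreover have "fscale (inverse (c - c')) (v' - v) = b"
        using False by (simp add: e2[symmetric] fscale_def fun_eq_iff)
      ultimately show ?thesis using nb by simp
    qed
  qed
  have "card (fvs.span (insert b B)) = card (UNIV :: 'a set) * card (fvs.span B)"
    unfolding eq by (simp add: card_image[OF inj] card_cartesian_product)
  then show ?case using IH insert.hyps eq by simp
qed

lemma card_subspace:
  fixes S :: "(nat \<Rightarrow> 'a::{field,finite}) set"
  assumes "fvs.subspace S" "finite S"
  shows "card S = card (UNIV :: 'a set) ^ fvs.dim S"
proof -
  obtain B where B: "B \<subseteq> S" "fvs.independent B" "S \<subseteq> fvs.span B" "card B = fvs.dim S"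
    by (rule fvs.basis_exists)
  have "fvs.span B = S" using B assms by (intro fvs.span_subspace) auto
  moreover have "finite B" using B assms finite_subset by blast
  ultimately show ?thesis using card_span_indep[of B] B by auto
qed

definition lf :: "nat \<Rightarrow> (nat \<Rightarrow> 'a::field) \<Rightarrow> (nat \<Rightarrow> 'a) \<Rightarrow> 'a" where
  "lf k y v = (\<Sum>i<k. y i * v i)"

lemma lf_add: "lf k y (v + w) = lf k y v + lf k y w"
  by (simp add: lf_def algebra_simps sum.distrib)
lemma lf_scale: "lf k y (fscale c v) = c * lf k y v"
  by (simp add: lf_def fscale_def sum_distrib_left algebra_simps)
lemma lf_diff: "lf k y (v - w) = lf k y v - lf k y w"
  by (simp add: lf_def algebra_simps sum_subtractf)
lemma lf_diff_left: "lf k (x - x') v = lf k x v - lf k x' v"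
  by (simp add: lf_def algebra_simps sum_subtractf)
lemma lf_add_left: "lf k (x + x') v = lf k x v + lf k x' v"
  by (simp add: lf_def algebra_simps sum.distrib)
lemma lf_scale_left: "lf k (fscale c x) v = c * lf k x v"
  by (simp add: lf_def fscale_def sum_distrib_left algebra_simps)
lemma lf_zero_left: "lf k 0 v = 0"
  by (simp add: lf_def)

lemma vecs_image: "vecs k = (\<lambda>g i. if i < k then g i else 0) ` (PiE {..<k} (\<lambda>_. UNIV))"
proof
  show "vecs k \<subseteq> (\<lambda>g i. if i < k then g i else 0) ` (PiE {..<k} (\<lambda>_. UNIV))"
  proof
    fix v assume v: "v \<in> vecs k"
    have "v = (\<lambda>i. if i < k then restrict v {..<k} i else 0)"
    proof (rule ext)
      fix i show "v i = (if i < k then restrict v {..<k} i else 0)"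
        using v unfolding vecs_def by (cases "i < k") auto
    qed
    moreover have "restrict v {..<k} \<in> PiE {..<k} (\<lambda>_. UNIV)" unfolding restrict_PiE_iff by (intro ballI UNIV_I)
    ultimately show "v \<in> (\<lambda>g i. if i < k then g i else 0) ` (PiE {..<k} (\<lambda>_. UNIV))"
      by blast
  qed
next
  show "(\<lambda>g i. if i < k then g i else 0) ` (PiE {..<k} (\<lambda>_. UNIV)) \<subseteq> vecs k"
    unfolding vecs_def by (intro image_subsetI) simp
qed

lemma finite_card_vecs:
  "finite (vecs k :: (nat \<Rightarrow> 'a::{field,finite}) set) \<and> card (vecs k :: (nat \<Rightarrow> 'a) set) = card (UNIV :: 'a set) ^ k"
proof -
  have inj: "inj_on (\<lambda>g i. if i < k then g i else (0::'a)) (PiE {..<k} (\<lambda>_. UNIV))"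
  proof (rule inj_onI)
    fix f g :: "nat \<Rightarrow> 'a" assume f: "f \<in> PiE {..<k} (\<lambda>_. UNIV)" and g: "g \<in> PiE {..<k} (\<lambda>_. UNIV)"
      and e: "(\<lambda>i. if i < k then f i else 0) = (\<lambda>i. if i < k then g i else 0)"
    show "f = g"
    proof (rule PiE_ext[OF f g])
      fix x assume "x \<in> {..<k}" then show "f x = g x" using fun_cong[OF e, of x] by simp
    qed
  qed
  show ?thesis unfolding vecs_image
    by (simp add: card_image[OF inj] card_PiE finite_PiE)
qed

lemma subspace_vecs: "fvs.subspace (vecs k)"
  by (auto simp: fvs.subspace_def vecs_def fscale_def)

lemma hyper_card:
  fixes W :: "(nat \<Rightarrow> 'a::{field,finite}) set"
  assumes W: "fvs.subspace W" and w: "w \<in> W" "lf k y w \<noteq> 0"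
  shows "card W = card (UNIV :: 'a set) * card {v\<in>W. lf k y v = 0}"
proof -
  define f where "f = (\<lambda>(c, v). v + fscale c w)"
  have eq: "W = f ` (UNIV \<times> {v\<in>W. lf k y v = 0})"
  proof
    show "W \<subseteq> f ` (UNIV \<times> {v\<in>W. lf k y v = 0})"
    proof
      fix x assume x: "x \<in> W"
      define c where "c = lf k y x / lf k y w"
      have "x - fscale c w \<in> W" using W x w by (simp add: fvs.subspace_diff fvs.subspace_scale)
      moreover have "lf k y (x - fscale c w) = 0" using w by (simp add: lf_diff lf_scale c_def)
      moreover have "f (c, x - fscale c w) = x" by (simp add: f_def)
      ultimately show "x \<in> f ` (UNIV \<times> {v\<in>W. lf k y v = 0})"
        by (intro image_eqI[of _ _ "(c, x - fscale c w)"]) auto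
    qed
  next
    show "f ` (UNIV \<times> {v\<in>W. lf k y v = 0}) \<subseteq> W"
      using W w by (auto simp: f_def intro!: fvs.subspace_add fvs.subspace_scale)
  qed
  have inj: "inj_on f (UNIV \<times> {v\<in>W. lf k y v = 0})"
  proof (rule inj_onI, clarify)
    fix c v c' v' assume v: "lf k y v = 0" and v': "lf k y v' = 0" and e: "f (c, v) = f (c', v')"
    have "lf k y (f (c, v)) = lf k y (f (c', v'))" using e by simp
    then have "c * lf k y w = c' * lf k y w" using v v' by (simp add: f_def lf_add lf_scale)
    then have "c = c'" using w by simp
    then show "c = c' \<and> v = v'" using e by (simp add: f_def)
  qed
  show ?thesis
    by (subst eq) (simp add: card_image[OF inj] card_cartesian_product)
qed

lemma hyper_bound:
  fixes W :: "(nat \<Rightarrow> 'a::{field,finite}) set"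
  assumes W: "fvs.subspace W" "finite W" and cW: "card W = card (UNIV :: 'a set) ^ u"
  shows "card {v\<in>W. lf k y v \<noteq> 0} \<le> (card (UNIV :: 'a set) - 1) * card (UNIV :: 'a set) ^ (u - 1)"
    and "(\<exists>w\<in>W. lf k y w \<noteq> 0) \<Longrightarrow>
         card {v\<in>W. lf k y v \<noteq> 0} = (card (UNIV :: 'a set) - 1) * card (UNIV :: 'a set) ^ (u - 1)"
proof -
  let ?q = "card (UNIV :: 'a set)"
  have q2: "?q \<ge> 2"
  proof -
    have "card {0::'a, 1} \<le> ?q" by (rule card_mono) auto
    then show ?thesis by simp
  qed
  have main: "card {v\<in>W. lf k y v \<noteq> 0} = (?q - 1) * ?q ^ (u - 1)" if ex: "\<exists>w\<in>W. lf k y w \<noteq> 0"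
  proof -
    obtain w where w: "w \<in> W" "lf k y w \<noteq> 0" using ex by blast
    define m where "m = card {v\<in>W. lf k y v = 0}"
    have c1: "?q ^ u = ?q * m" using hyper_card[OF W(1) w] cW m_def by simp
    have u: "u \<noteq> 0"
    proof
      assume "u = 0" then have "?q * m = 1" using c1 by simp
      then show False using q2 by simp
    qed
    then have "?q ^ u = ?q * ?q ^ (u - 1)" using u by (cases u) auto
    then have "?q * m = ?q * ?q ^ (u - 1)" using c1 by simp
    then have mq: "m = ?q ^ (u - 1)" using q2 by simp
    have WU: "W = {v\<in>W. lf k y v \<noteq> 0} \<union> {v\<in>W. lf k y v = 0}" by auto
    have "card ({v\<in>W. lf k y v \<noteq> 0} \<union> {v\<in>W. lf k y v = 0}) = card {v\<in>W. lf k y v \<noteq> 0} + card {v\<in>W. lf k y v = 0}"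
      by (rule card_Un_disjoint) (use W(2) in auto)
    then have "card W = card {v\<in>W. lf k y v \<noteq> 0} + m"
      unfolding m_def using WU by simp
    then have "card {v\<in>W. lf k y v \<noteq> 0} = ?q * m - m" using cW c1 by simp
    then show ?thesis using mq by (simp add: diff_mult_distrib)
  qed
  show "card {v\<in>W. lf k y v \<noteq> 0} \<le> (?q - 1) * ?q ^ (u - 1)"
  proof (cases "\<exists>w\<in>W. lf k y w \<noteq> 0")
    case True then show ?thesis using main by simp
  next
    case False
    have e: "{v\<in>W. lf k y v \<noteq> 0} = {}" using False by auto
    show ?thesis by (simp add: e)
  qed
  show "(\<exists>w\<in>W. lf k y w \<noteq> 0) \<Longrightarrow> card {v\<in>W. lf k y v \<noteq> 0} = (?q - 1) * ?q ^ (u - 1)"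
    by (rule main)
qed

theorem theorem3p1:
  fixes q k h :: nat
    and u :: "nat \<Rightarrow> nat"
    and W :: "nat \<Rightarrow> (nat \<Rightarrow> 'a::{field,finite}) set"
    and cols :: "(nat \<Rightarrow> 'a) list"
  assumes q: "q = card (UNIV :: 'a set)"
    and k: "k \<ge> 3" and h: "h \<ge> 2"
    and u0: "1 \<le> u 0" and u01: "u 0 < u 1"
    and umono: "\<forall>i. 1 \<le> i \<and> i < h \<longrightarrow> u i \<le> u (Suc i)"
    and Wsub: "\<forall>i\<le>h. fvs.subspace (W i) \<and> W i \<subseteq> vecs k"
    and Wdim: "\<forall>i\<le>h. fvs.dim (W i) = u i"
    and Wint: "\<forall>i\<in>{1..h}. \<forall>j\<in>{1..h}. i \<noteq> j \<longrightarrow> W i \<inter> W j = W 0"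
    and ineq: "int q ^ k - int q ^ (k - 1) >
                 int q ^ u 0 - 1 + (\<Sum>i=1..h. int q ^ u i - int q ^ u 0)"
    and cols_in: "\<forall>c\<in>set cols. c \<in> {v \<in> vecs k. v \<noteq> 0 \<and> (\<forall>i\<in>{1..h}. v \<notin> W i)}"
    and cols_rep: "\<forall>v\<in>{v \<in> vecs k. v \<noteq> 0 \<and> (\<forall>i\<in>{1..h}. v \<notin> W i)}.
                     \<exists>!j. j < length cols \<and> (\<exists>c::'a. c \<noteq> 0 \<and> cols ! j = fscale c v)"
  shows "real (length cols) =
           ((real q ^ k - real q ^ u 0) - (\<Sum>i=1..h. real q ^ u i - real q ^ u 0)) / (real q - 1)
         \<and> fvs.subspace (gen_code k cols)
         \<and> fvs.dim (gen_code k cols) = k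
         \<and> int (min_dist (length cols) (gen_code k cols)) \<ge>
             int q ^ (k - 1) - (\<Sum>i=1..h. int q ^ (u i - 1))"
proof -
  let ?F = "UNIV :: 'a set"
  define n where "n = length cols"
  have q2: "q \<ge> 2"
  proof -
    have "card {0::'a, 1} \<le> card ?F" by (rule card_mono) auto
    then show ?thesis using q by simp
  qed
  define V where "V = (vecs k :: (nat \<Rightarrow> 'a) set)"
  have finV: "finite V" and cardV: "card V = q ^ k"
    using finite_card_vecs[where k=k, where 'a='a] q by (auto simp: V_def)
  have subV: "fvs.subspace V" unfolding V_def by (rule subspace_vecs)
  have W0i: "W 0 \<subseteq> W i" if i: "i \<in> {1..h}" for i
  proof -
    define j where "j = (if i = 1 then 2 else (1::nat))"
    have "j \<in> {1..h}" "j \<noteq> i" using h i by (auto simp: j_def)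
    then have "W i \<inter> W j = W 0" using Wint i by blast
    then show ?thesis by blast
  qed
  have Wsp: "fvs.subspace (W i)" "W i \<subseteq> V" if "i \<le> h" for i
    using Wsub that by (auto simp: V_def)
  have Wfin: "finite (W i)" if "i \<le> h" for i
    using Wsp[OF that] finV finite_subset by blast
  have Wcard: "card (W i) = q ^ u i" if "i \<le> h" for i
    using card_subspace[OF Wsp(1)[OF that] Wfin[OF that]] Wdim that q by simp
  define Wu where "Wu = (\<Union>i\<in>{1..h}. W i)"
  have WuV: "Wu \<subseteq> V" unfolding Wu_def using Wsp(2) by force
  have finWu: "finite Wu" using WuV finV finite_subset by blast
  have zW: "0 \<in> W i" if "i \<le> h" for i using Wsp(1)[OF that] by (rule fvs.subspace_0)
  have zWu: "0 \<in> Wu" using zW h by (auto simp: Wu_def intro!: bexI[of _ 1])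
  define U where "U = {v \<in> vecs k. v \<noteq> 0 \<and> (\<forall>i\<in>{1..h}. v \<notin> W i)}"
  have U_eq: "U = V - Wu" using zWu by (auto simp: U_def V_def Wu_def)
  have cardWu: "int (card Wu) = int q ^ u 0 + (\<Sum>i=1..h. int q ^ u i - int q ^ u 0)"
  proof -
    have W01: "W 0 \<subseteq> W 1" using W0i h by auto
    have h1: "1 \<in> {1..h}" using h by auto
    have e1: "Wu = W 0 \<union> (\<Union>i\<in>{1..h}. W i - W 0)"
      unfolding Wu_def using W01 h1 by blast
    have fin2: "finite (\<Union>i\<in>{1..h}. W i - W 0)" using Wfin by auto
    have c1: "card Wu = card (W 0) + card (\<Union>i\<in>{1..h}. W i - W 0)"
      unfolding e1 by (rule card_Un_disjoint) (use Wfin fin2 in auto)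
    have c2: "card (\<Union>i\<in>{1..h}. W i - W 0) = (\<Sum>i=1..h. card (W i - W 0))"
    proof (rule card_UN_disjoint)
      show "finite {1..h}" by simp
      show "\<forall>i\<in>{1..h}. finite (W i - W 0)" using Wfin by auto
      show "\<forall>i\<in>{1..h}. \<forall>j\<in>{1..h}. i \<noteq> j \<longrightarrow> (W i - W 0) \<inter> (W j - W 0) = {}"
        using Wint by blast
    qed
    have c3: "int (card (W i - W 0)) = int q ^ u i - int q ^ u 0" if "i \<in> {1..h}" for i
    proof -
      have "card (W i - W 0) = card (W i) - card (W 0)"
        using W0i[OF that] Wfin that by (intro card_Diff_subset) (auto intro: finite_subset)
      moreover have "card (W 0) \<le> card (W i)" using W0i[OF that] Wfin that by (intro card_mono) auto
      ultimately show ?thesis using Wcard that by (simp add: of_nat_diff)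
    qed
    show ?thesis using c1 c2 c3 Wcard by simp
  qed
  have cardUWu: "card U + card Wu = q ^ k"
    using U_eq WuV finV cardV by (metis card_Diff_subset card_mono finite_subset le_add_diff_inverse2)
  have Uscale: "fscale c v \<in> U" if v: "v \<in> U" and c: "c \<noteq> 0" for v c
  proof -
    have vV: "v \<in> vecs k" and v0: "v \<noteq> 0" and vW: "\<forall>i\<in>{1..h}. v \<notin> W i" using v by (auto simp: U_def)
    have "fscale c v \<in> vecs k" using vV by (auto simp: vecs_def fscale_def)
    moreover have "fscale c v \<noteq> 0"
    proof
      assume "fscale c v = 0"
      then have "v = 0" using c by (auto simp: fscale_def fun_eq_iff)
      then show False using v0 by simp
    qed
    moreover have "fscale c v \<notin> W i" if i: "i \<in> {1..h}" for i
    proof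
      assume fc: "fscale c v \<in> W i"
      have ih: "i \<le> h" using i by simp
      have "fscale (inverse c) (fscale c v) \<in> W i"
        by (rule fvs.subspace_scale[OF Wsp(1)[OF ih] fc])
      moreover have "fscale (inverse c) (fscale c v) = v" using c by (simp add: fscale_def fun_eq_iff)
      ultimately show False using vW i by simp
    qed
    ultimately show ?thesis by (auto simp: U_def)
  qed
  have colsU: "cols ! j \<in> U" if "j < n" for j
    using cols_in that by (auto simp: U_def n_def)
  have rep: "\<exists>!j. j < n \<and> (\<exists>c::'a. c \<noteq> 0 \<and> cols ! j = fscale c v)" if "v \<in> U" for v
    using cols_rep that by (simp add: U_def n_def)
  define g where "g = (\<lambda>(j, c). fscale c (cols ! j))"
  have g_inj: "inj_on g (A \<times> (?F - {0}))" if A: "A \<subseteq> {..<n}" for A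
  proof (rule inj_onI)
    fix x y assume x: "x \<in> A \<times> (?F - {0})" and y: "y \<in> A \<times> (?F - {0})" and exy: "g x = g y"
    obtain j c where xjc: "x = (j, c)" by (cases x)
    obtain j' c' where yjc: "y = (j', c')" by (cases y)
    have j: "j \<in> A" and c: "c \<noteq> 0" and j': "j' \<in> A" and c': "c' \<noteq> 0"
      using x y xjc yjc by auto
    have e: "g (j, c) = g (j', c')" using exy xjc yjc by simp
    have jn: "j < n" "j' < n" using A j j' by auto
    let ?v = "cols ! j"
    have vU: "?v \<in> U" by (rule colsU[OF jn(1)])
    have ee: "fscale c ?v = fscale c' (cols ! j')" using e by (simp add: g_def)
    have "cols ! j' = fscale (c / c') ?v"
      using ee c' by (simp add: fscale_def fun_eq_iff field_simps)
    moreover have "cols ! j = fscale 1 ?v" by (simp add: fscale_def)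
    moreover have "c / c' \<noteq> 0" using c c' by simp
    ultimately have "j = j'" using rep[OF vU] jn by (metis one_neq_zero)
    moreover have "c = c'"
    proof -
      have "?v \<noteq> 0" using vU by (simp add: U_def)
      then obtain i where i: "?v i \<noteq> 0" by (auto simp: fun_eq_iff)
      have "c * ?v i = c' * (cols ! j') i" using fun_cong[OF ee, of i] by (simp add: fscale_def)
      then have "c * ?v i = c' * ?v i" using \<open>j = j'\<close> by simp
      then show ?thesis using i by simp
    qed
    ultimately show "x = y" using xjc yjc by simp
  qed
  have g_img: "g ` ({j. j < n \<and> P (cols ! j)} \<times> (?F - {0})) = {v \<in> U. P v}"
    if P: "\<And>v c. c \<noteq> 0 \<Longrightarrow> P (fscale c v) = P v" for P
  proof
    show "g ` ({j. j < n \<and> P (cols ! j)} \<times> (?F - {0})) \<subseteq> {v \<in> U. P v}"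
      using colsU Uscale P by (auto simp: g_def)
  next
    show "{v \<in> U. P v} \<subseteq> g ` ({j. j < n \<and> P (cols ! j)} \<times> (?F - {0}))"
    proof clarify
      fix v assume vU: "v \<in> U" and Pv: "P v"
      obtain j d where j: "j < n" and d: "d \<noteq> 0" and cj: "cols ! j = fscale d v"
        using rep[OF vU] by blast
      have "g (j, inverse d) = v" using d cj by (simp add: g_def fscale_def fun_eq_iff)
      moreover have "P (cols ! j)" using cj P[OF d] Pv by simp
      ultimately show "v \<in> g ` ({j. j < n \<and> P (cols ! j)} \<times> (?F - {0}))"
        using j d by (intro image_eqI[of _ _ "(j, inverse d)"]) auto
    qed
  qed
  have cardF0: "card (?F - {0}) = q - 1" using q by (simp add: card_Diff_singleton)
  have g_card: "card {v \<in> U. P v} = card {j. j < n \<and> P (cols ! j)} * (q - 1)"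
    if P: "\<And>v c. c \<noteq> 0 \<Longrightarrow> P (fscale c v) = P v" for P
  proof -
    have "card {v \<in> U. P v} = card (g ` ({j. j < n \<and> P (cols ! j)} \<times> (?F - {0})))"
      using g_img[OF P] by simp
    also have "\<dots> = card ({j. j < n \<and> P (cols ! j)} \<times> (?F - {0}))"
      by (rule card_image[OF g_inj]) auto
    also have "\<dots> = card {j. j < n \<and> P (cols ! j)} * (q - 1)"
      using cardF0 by (simp add: card_cartesian_product)
    finally show ?thesis .
  qed
  have cardU: "card U = n * (q - 1)"
    using g_card[of "\<lambda>_. True"] by simp
  have len: "real n = ((real q ^ k - real q ^ u 0) - (\<Sum>i=1..h. real q ^ u i - real q ^ u 0)) / (real q - 1)"
  proof -
    have "int n * (int q - 1) = int q ^ k - int q ^ u 0 - (\<Sum>i=1..h. int q ^ u i - int q ^ u 0)"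
    proof -
      have a1: "int (card U) + int (card Wu) = int q ^ k"
        using cardUWu by (metis of_nat_add of_nat_power)
      have a2: "int (card U) = int n * (int q - 1)"
        using cardU q2 by (simp add: of_nat_diff)
      show ?thesis using a1 a2 cardWu by simp
    qed
    then have "real_of_int (int n * (int q - 1)) =
        real_of_int (int q ^ k - int q ^ u 0 - (\<Sum>i=1..h. int q ^ u i - int q ^ u 0))" by simp
    then have "real n * (real q - 1) = (real q ^ k - real q ^ u 0) - (\<Sum>i=1..h. real q ^ u i - real q ^ u 0)"
      by (simp add: of_int_sum)
    moreover have "real q - 1 \<noteq> 0" using q2 by simp
    ultimately show ?thesis by (simp add: eq_divide_eq)
  qed
  define L where "L = (\<lambda>x j. if j < n then lf k x (cols ! j) else (0::'a))"
  have code_eq: "gen_code k cols = L ` V"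
    unfolding gen_code_def L_def lf_def V_def n_def by blast
  have L_diff: "L (x - x') = L x - L x'" for x x' by (simp add: L_def fun_eq_iff lf_diff_left)
  have L_add: "L (x + x') = L x + L x'" for x x' by (simp add: L_def fun_eq_iff lf_add_left)
  have L_scale: "L (fscale c x) = fscale c (L x)" for c x
  proof (rule ext)
    fix j show "L (fscale c x) j = fscale c (L x) j"
      unfolding fscale_def[of c "L x"] by (simp add: L_def lf_scale_left)
  qed
  have L0: "L 0 = 0" by (simp add: L_def fun_eq_iff lf_zero_left)
  define A where "A y = {j. j < n \<and> lf k y (cols ! j) \<noteq> 0}" for y
  have cardUA: "card {v\<in>U. lf k y v \<noteq> 0} = card (A y) * (q - 1)" for y
    using g_card[of "\<lambda>v. lf k y v \<noteq> 0"] by (simp add: A_def lf_scale)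
  have finU: "finite U" using U_eq finV by simp
  have cardV': "card V = card ?F ^ k" using cardV q by simp
  have VH: "card {v\<in>V. lf k y v \<noteq> 0} = (q - 1) * q ^ (k - 1)" if yV: "y \<in> V" and y0: "y \<noteq> 0" for y
  proof -
    obtain i where i: "y i \<noteq> 0" using y0 by (auto simp: fun_eq_iff)
    have ik: "i < k" using yV i by (auto simp: V_def vecs_def not_less[symmetric])
    define e where "e = (\<lambda>j. if j = i then (1::'a) else 0)"
    have eV: "e \<in> V" using ik by (auto simp: V_def vecs_def e_def)
    have lfe: "lf k y e = y i" using ik by (simp add: lf_def e_def if_distrib sum.delta cong: if_cong)
    have "\<exists>w\<in>V. lf k y w \<noteq> 0" by (rule bexI[of _ e]) (use lfe i eV in simp_all)
    from hyper_bound(2)[OF subV finV cardV' this] show ?thesis using q by simp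
  qed
  have WH: "card {v\<in>W i. lf k y v \<noteq> 0} \<le> (q - 1) * q ^ (u i - 1)" if "i \<le> h" for i y
    using hyper_bound(1)[OF Wsp(1)[OF that] Wfin[OF that], of "u i" k y] Wcard[OF that] q by simp
  have weight: "int q ^ (k - 1) - (\<Sum>i=1..h. int q ^ (u i - 1)) \<le> int (card (A y))"
    if yV: "y \<in> V" and y0: "y \<noteq> 0" for y
  proof -
    have cover: "{v\<in>V. lf k y v \<noteq> 0} \<subseteq> {v\<in>U. lf k y v \<noteq> 0} \<union> (\<Union>i\<in>{1..h}. {v\<in>W i. lf k y v \<noteq> 0})"
      by (auto simp: U_eq Wu_def)
    have finW': "finite {v\<in>W i. lf k y v \<noteq> 0}" if "i \<in> {1..h}" for i using Wfin that by auto
    have "(q - 1) * q ^ (k - 1) = card {v\<in>V. lf k y v \<noteq> 0}" using VH[OF yV y0] by simp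
    also have "\<dots> \<le> card ({v\<in>U. lf k y v \<noteq> 0} \<union> (\<Union>i\<in>{1..h}. {v\<in>W i. lf k y v \<noteq> 0}))"
      by (rule card_mono[OF _ cover]) (use finU finW' in auto)
    also have "\<dots> \<le> card {v\<in>U. lf k y v \<noteq> 0} + card (\<Union>i\<in>{1..h}. {v\<in>W i. lf k y v \<noteq> 0})"
      by (rule card_Un_le)
    also have "card (\<Union>i\<in>{1..h}. {v\<in>W i. lf k y v \<noteq> 0}) \<le> (\<Sum>i\<in>{1..h}. card {v\<in>W i. lf k y v \<noteq> 0})"
      by (rule card_UN_le) simp
    also have "\<dots> \<le> (\<Sum>i\<in>{1..h}. (q - 1) * q ^ (u i - 1))"
      by (rule sum_mono) (use WH in auto)
    also have "\<dots> = (q - 1) * (\<Sum>i\<in>{1..h}. q ^ (u i - 1))" by (simp add: sum_distrib_left)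
    finally have "(q - 1) * q ^ (k - 1) \<le> (q - 1) * (card (A y) + (\<Sum>i\<in>{1..h}. q ^ (u i - 1)))"
      using cardUA[of y] by (simp add: algebra_simps)
    then have "q ^ (k - 1) \<le> card (A y) + (\<Sum>i\<in>{1..h}. q ^ (u i - 1))" using q2 by simp
    then have "int (q ^ (k - 1)) \<le> int (card (A y) + (\<Sum>i\<in>{1..h}. q ^ (u i - 1)))" by (rule of_nat_mono)
    then show ?thesis by (simp add: of_nat_sum)
  qed
  have Linj0: "L y \<noteq> 0" if yV: "y \<in> V" and y0: "y \<noteq> 0" for y
  proof
    assume Ly: "L y = 0"
    have "A y = {}"
    proof -
      have "lf k y (cols ! j) = 0" if "j < n" for j using fun_cong[OF Ly, of j] that by (simp add: L_def)
      then show ?thesis by (auto simp: A_def)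
    qed
    then have "card {v\<in>U. lf k y v \<noteq> 0} = 0" using cardUA[of y] by simp
    then have e0: "{v\<in>U. lf k y v \<noteq> 0} = {}" using finU by simp
    have "{v\<in>V. lf k y v \<noteq> 0} \<subseteq> Wu - {0}"
    proof
      fix v assume v: "v \<in> {v\<in>V. lf k y v \<noteq> 0}"
      then have "v \<noteq> 0" by (auto simp: lf_def)
      moreover have "v \<in> Wu" using v e0 U_eq by blast
      ultimately show "v \<in> Wu - {0}" by simp
    qed
    then have "card {v\<in>V. lf k y v \<noteq> 0} \<le> card (Wu - {0})" using finWu by (intro card_mono) auto
    also have "\<dots> = card Wu - 1" using zWu finWu by simp
    finally have "(q - 1) * q ^ (k - 1) \<le> card Wu - 1" using VH[OF yV y0] by simp
    then have "int ((q - 1) * q ^ (k - 1)) \<le> int (card Wu - 1)" by (rule of_nat_mono)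
    moreover have "card Wu \<ge> 1" using zWu finWu by (metis One_nat_def Suc_leI card_gt_0_iff empty_iff)
    ultimately have "(int q - 1) * int q ^ (k - 1) \<le> int (card Wu) - 1" using q2 by (simp add: of_nat_diff)
    moreover have "int q ^ k = int q * int q ^ (k - 1)" using k by (cases k) auto
    ultimately show False using ineq cardWu by (simp add: algebra_simps)
  qed
  have Linj: "inj_on L V"
  proof (rule inj_onI)
    fix x x' assume x: "x \<in> V" and x': "x' \<in> V" and e: "L x = L x'"
    have "x - x' \<in> V" by (rule fvs.subspace_diff[OF subV x x']) 
    moreover have "L (x - x') = 0" using e by (simp add: L_diff)
    ultimately have "x - x' = 0" using Linj0 by blast
    then show "x = x'" by simp
  qed
  have finC: "finite (L ` V)" using finV by simp
  have cardC: "card (L ` V) = q ^ k" using card_image[OF Linj] cardV by simp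
  have subC: "fvs.subspace (L ` V)"
    unfolding fvs.subspace_def
  proof (intro conjI ballI allI)
    show "0 \<in> L ` V" using L0 fvs.subspace_0[OF subV] by (metis image_eqI)
  next
    fix a b assume "a \<in> L ` V" "b \<in> L ` V"
    then obtain x x' where "x \<in> V" "x' \<in> V" "a = L x" "b = L x'" by blast
    then show "a + b \<in> L ` V" using L_add fvs.subspace_add[OF subV] by (metis image_eqI)
  next
    fix c a assume "a \<in> L ` V"
    then obtain x where "x \<in> V" "a = L x" by blast
    then show "fscale c a \<in> L ` V" using L_scale fvs.subspace_scale[OF subV] by (metis image_eqI)
  qed
  have dimC: "fvs.dim (L ` V) = k"
  proof -
    have "q ^ fvs.dim (L ` V) = q ^ k" using card_subspace[OF subC finC] cardC q by simp
    then show ?thesis using q2 by (simp add: power_inject_exp)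
  qed
  define S where "S = {hamming_dist n c c' | c c'. c \<in> L ` V \<and> c' \<in> L ` V \<and> c \<noteq> c'}"
  have Sb: "int q ^ (k - 1) - (\<Sum>i=1..h. int q ^ (u i - 1)) \<le> int s" if s: "s \<in> S" for s
  proof -
    obtain x x' where x: "x \<in> V" and x': "x' \<in> V" and ne: "L x \<noteq> L x'"
      and sd: "s = hamming_dist n (L x) (L x')" using s by (auto simp: S_def)
    have "x - x' \<in> V" by (rule fvs.subspace_diff[OF subV x x'])
    moreover have "x - x' \<noteq> 0" using ne by auto
    moreover have "hamming_dist n (L x) (L x') = card (A (x - x'))"
      unfolding hamming_dist_def A_def
      by (rule arg_cong[where f=card]) (auto simp: L_def lf_diff_left)
    ultimately show ?thesis using weight sd by simp
  qed
  have Sfin: "finite S"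
  proof (rule finite_subset)
    show "S \<subseteq> {..n}"
    proof
      fix s assume "s \<in> S"
      then obtain c c' :: "nat \<Rightarrow> 'a" where "s = hamming_dist n c c'" unfolding S_def by blast
      moreover have "card {j. j < n \<and> c j \<noteq> c' j} \<le> card {..<n}" by (rule card_mono) auto
      ultimately show "s \<in> {..n}" by (simp add: hamming_dist_def)
    qed
  qed simp
  have Sne: "S \<noteq> {}"
  proof -
    define e where "e = (\<lambda>j::nat. if j = 0 then (1::'a) else 0)"
    have eV: "e \<in> V" using k by (auto simp: V_def vecs_def e_def)
    have "e \<noteq> 0" by (auto simp: e_def fun_eq_iff)
    then have "L e \<noteq> L 0" using Linj0[OF eV] L0 by simp
    moreover have "0 \<in> V" using fvs.subspace_0[OF subV] .
    ultimately have "hamming_dist n (L e) (L 0) \<in> S" using eV unfolding S_def by blast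
    then show ?thesis by blast
  qed
  have md: "int q ^ (k - 1) - (\<Sum>i=1..h. int q ^ (u i - 1)) \<le> int (min_dist n (L ` V))"
    unfolding min_dist_def S_def[symmetric] using Sb Min_in[OF Sfin Sne] by blast
  show ?thesis using len subC dimC md unfolding code_eq n_def by simp
qed

end
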